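(* Let $f(t)\neq 0$ be a Castelnuovo polynomial with $d=\deg f(t)>0$, and let $f^{\ast}(t)=f(t)-t^{d-1}-t^{d}$. If $f^{\ast}(t)$ is not a Castelnuovo polynomial, then \[f(t)=1+2t+3t^2+\dots+(u+1)t^u\] for some integer $u>0$.
   Context: $\mathbb{N}=\{0,1,2,\dots\}$. A function $s:\mathbb{Z}\to\mathbb{C}$ is identified with its generating function $\sum_n s(n)t^n$. A Castelnuovo function is a finitely supported function $s:\mathbb{N}\to\mathbb{N}$ such that for some integer $\sigma\ge 0$, $s(0)=1,s(1)=2,\dots,s(\sigma-1)=\sigma$ and $s(\sigma-1)\ge s(\sigma)\ge s(\sigma+1)\ge\dots\ge 0$ (with the convention $s(-1)=0$ when $\sigma=0$); a Castelnuovo polynomial is the generating function $\sum_n s(n)t^n$ of a Castelnuovo function. *)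

theory Defs
  imports "HOL-Computational_Algebra.Polynomial"
begin

text \<open>A Castelnuovo function, viewed as an integer-valued function on the naturals
  (so that it can be compared with arbitrary integer coefficient sequences):
  finitely supported, values in N, s(n) = n+1 for n < sigma, and non-increasing
  from index sigma-1 on (with the convention s(-1) = 0 when sigma = 0).\<close>
definition castelnuovo_fun :: "(nat \<Rightarrow> int) \<Rightarrow> bool" where
  "castelnuovo_fun s \<longleftrightarrow>
     finite {n. s n \<noteq> 0} \<and> (\<forall>n. 0 \<le> s n) \<and>
     (\<exists>\<sigma>::nat. (\<forall>n<\<sigma>. s n = int n + 1) \<and>
        s \<sigma> \<le> (if \<sigma> = 0 then 0 else s (\<sigma> - 1)) \<and>
        (\<forall>n\<ge>\<sigma>. s (Suc n) \<le> s n))"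

definition castelnuovo_poly :: "int poly \<Rightarrow> bool" where
  "castelnuovo_poly f \<longleftrightarrow> castelnuovo_fun (coeff f)"

end

theory Submission
  imports Defs
begin

theorem lemma3:
  fixes f :: "int poly"
  assumes "f \<noteq> 0" and "castelnuovo_poly f" and "degree f > 0"
    and "\<not> castelnuovo_poly (f - monom 1 (degree f - 1) - monom 1 (degree f))"
  shows "\<exists>u::nat. u > 0 \<and> f = (\<Sum>i\<le>u. monom (int i + 1) i)"
proof -
  define d where "d = degree f"
  define s where "s = coeff f"
  define t where "t = coeff (f - monom 1 (d - 1) - monom 1 d)"
  have dpos: "d > 0" using assms(3) d_def by simp
  have t: "t n = s n - (if n = d - 1 then 1 else 0) - (if n = d then 1 else 0)" for n
    unfolding t_def s_def by (simp add: coeff_diff coeff_monom)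
  have sz: "s n = 0" if "n > d" for n using that unfolding s_def d_def by (simp add: coeff_eq_0)
  have sd: "s d \<noteq> 0" unfolding s_def d_def using assms(1) by simp
  from assms(2) have C: "castelnuovo_fun s" unfolding castelnuovo_poly_def s_def by simp
  then have nn: "\<And>n. 0 \<le> s n" unfolding castelnuovo_fun_def by blast
  from C obtain \<sigma> where p: "\<And>n. n < \<sigma> \<Longrightarrow> s n = int n + 1"
    and q: "s \<sigma> \<le> (if \<sigma> = 0 then 0 else s (\<sigma> - 1))"
    and m: "\<And>n. n \<ge> \<sigma> \<Longrightarrow> s (Suc n) \<le> s n"
    unfolding castelnuovo_fun_def by blast
  have sd1: "s d \<ge> 1" using sd nn[of d] by linarith
  have mono: "s j \<le> s i" if "\<sigma> \<le> i" "i \<le> j" for i j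
    using that(2,1)
  proof (induction j rule: dec_induct)
    case base then show ?case by simp
  next
    case (step k) then show ?case using m[of k] by linarith
  qed
  have sig0: "\<sigma> > 0"
  proof (rule ccontr)
    assume "\<not> \<sigma> > 0"
    then have "\<sigma> = 0" by simp
    then have "s 0 \<le> 0" using q by simp
    then have "s d \<le> 0" using mono[of 0 d] \<open>\<sigma> = 0\<close> by simp
    then show False using sd1 by simp
  qed
  have big: "\<sigma> > d"
  proof (rule ccontr)
    assume "\<not> \<sigma> > d"
    then have sle: "\<sigma> \<le> d" by simp
    have sdm: "s d \<le> s (d - 1)"
    proof (cases "\<sigma> \<le> d - 1")
      case True then show ?thesis using m[of "d-1"] dpos by simp
    next
      case False then have "\<sigma> = d" using sle by simp
      then show ?thesis using q sig0 by simp
    qed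
    define \<sigma>' where "\<sigma>' = min \<sigma> (d - 1)"
    have "castelnuovo_fun t"
      unfolding castelnuovo_fun_def
    proof (intro conjI exI[of _ \<sigma>'] allI impI)
      have "{n. t n \<noteq> 0} \<subseteq> {..d}"
        using sz t by (auto simp: not_le[symmetric])
      then show "finite {n. t n \<noteq> 0}" using finite_subset by blast
    next
      fix n show "0 \<le> t n" using t[of n] nn[of n] sd1 sdm dpos by auto
    next
      fix n assume "n < \<sigma>'" then show "t n = int n + 1"
        using t[of n] p[of n] unfolding \<sigma>'_def by auto
    next
      show "t \<sigma>' \<le> (if \<sigma>' = 0 then 0 else t (\<sigma>' - 1))"
      proof (cases "\<sigma> \<le> d - 1")
        case True
        then have e: "\<sigma>' = \<sigma>" unfolding \<sigma>'_def by simp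
        show ?thesis using True t[of \<sigma>] t[of "\<sigma> - 1"] q sig0 dpos unfolding e by auto
      next
        case False then have "\<sigma> = d" using sle by simp
        then have e: "\<sigma>' = d - 1" unfolding \<sigma>'_def by simp
        show ?thesis
        proof (cases "d = 1")
          case True then show ?thesis using t[of 0] p[of 0] \<open>\<sigma> = d\<close> e by simp
        next
          case False
          then obtain k where k: "d = Suc (Suc k)" using dpos by (cases d; cases "d - 1") auto
          show ?thesis using t[of "Suc k"] t[of k] p[of "Suc k"] p[of k] \<open>\<sigma> = d\<close> e k by auto
        qed
      qed
    next
      fix n assume nge: "\<sigma>' \<le> n"
      show "t (Suc n) \<le> t n"
      proof (cases "\<sigma> \<le> n")
        case True
        then show ?thesis using t[of n] t[of "Suc n"] m[of n] sz[of "Suc n"] sd1 dpos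
          by auto
      next
        case False
        then have "n = d - 1" "\<sigma> = d" using nge sle unfolding \<sigma>'_def by auto
        then show ?thesis using t[of n] t[of "Suc n"] sdm dpos by auto
      qed
    qed
    then show False using assms(4) unfolding castelnuovo_poly_def t_def d_def by simp
  qed
  have sd_eq: "\<sigma> = d + 1"
  proof (rule ccontr)
    assume "\<sigma> \<noteq> d + 1"
    then have "d + 1 < \<sigma>" using big by simp
    then have "s (d+1) = int (d+1) + 1" using p by blast
    then show False using sz[of "d+1"] by simp
  qed
  show ?thesis
  proof (intro exI conjI)
    show "d > 0" by (rule dpos)
    show "f = (\<Sum>i\<le>d. monom (int i + 1) i)"
    proof (rule poly_eqI)
      fix n
      have "coeff (\<Sum>i\<le>d. monom (int i + 1) i) n = (\<Sum>i\<le>d. if i = n then int i + 1 else 0)"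
        by (simp add: coeff_sum coeff_monom)
      also have "\<dots> = (if n \<le> d then int n + 1 else 0)"
        by (simp add: sum.delta)
      also have "\<dots> = coeff f n"
        using p[of n] sz[of n] sd_eq unfolding s_def by auto
      finally show "coeff f n = coeff (\<Sum>i\<le>d. monom (int i + 1) i) n" by simp
    qed
  qed
qed

end
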